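(* Let $r,s$ be integers with $r>s>0$ and let $\epsilon\in\{0,1\}$. Let $p_r$ be a real polynomial of degree at most $r$ and $q_{s-1+\epsilon}$ a real polynomial of degree at most $s-1+\epsilon$, and let either $$g(t)=p_r(t^2)+t\,(1-t^2)^{r-s}q_{s-1+\epsilon}(t^2)\quad\text{or}\quad g(t)=p_r(t^2)+t^{-1}(1-t^2)^{r-s}q_{s-1+\epsilon}(t^2).$$ If $g$ vanishes at $r+s+1+\epsilon$ distinct points of $(0,1)$, then $g\equiv0$ on $(0,1)$ (equivalently $p_r\equiv0$ and $q_{s-1+\epsilon}\equiv0$). *)

theory Defs
  imports "HOL-Analysis.Analysis" "HOL-Computational_Algebra.Polynomial"
begin

definition g1 :: "nat \<Rightarrow> nat \<Rightarrow> real poly \<Rightarrow> real poly \<Rightarrow> real \<Rightarrow> real" where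
  "g1 r s p q t = poly p (t^2) + t * (1 - t^2)^(r - s) * poly q (t^2)"

definition g2 :: "nat \<Rightarrow> nat \<Rightarrow> real poly \<Rightarrow> real poly \<Rightarrow> real \<Rightarrow> real" where
  "g2 r s p q t = poly p (t^2) + inverse t * (1 - t^2)^(r - s) * poly q (t^2)"

end

theory Submission
  imports Defs
begin

fun fnz :: "real list \<Rightarrow> real" where
  "fnz [] = 0"
| "fnz (x # xs) = (if x = 0 then fnz xs else x)"

fun sc :: "real list \<Rightarrow> nat" where
  "sc [] = 0"
| "sc (x # xs) = sc xs + (if x * fnz xs < 0 then 1 else 0)"

definition V :: "real poly \<Rightarrow> nat" where "V P = sc (coeffs P)"

lemma sc_cCons: "sc (cCons x xs) = sc (x # xs)"
  by (simp add: cCons_def)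

lemma fnz_cCons: "fnz (cCons x xs) = fnz (x # xs)"
  by (simp add: cCons_def)

lemma V_pCons: "V (pCons a p) = sc (coeffs p) + (if a * fnz (coeffs p) < 0 then 1 else 0)"
  by (simp add: V_def coeffs_pCons_eq_cCons sc_cCons)

lemma fnz_pCons: "fnz (coeffs (pCons a p)) = (if a = 0 then fnz (coeffs p) else a)"
  by (simp add: coeffs_pCons_eq_cCons fnz_cCons)

lemma fnz_zero_iff: "fnz (coeffs p) = 0 \<longleftrightarrow> p = 0"
proof (induction p rule: pCons_induct)
  case 0 then show ?case by simp
next
  case (pCons a p) then show ?case by (auto simp: fnz_pCons split: if_splits)
qed

lemma sc_le_length: "sc xs \<le> length xs - 1"
proof (induction xs)
  case Nil then show ?case by simp
next
  case (Cons x xs)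
  then show ?case by (cases xs) auto
qed

lemma V_le_degree: "V p \<le> degree p"
  using sc_le_length[of "coeffs p"] by (cases "p = 0") (auto simp: V_def length_coeffs_degree)

lemma sgn_mult_neg_iff:
  fixes x y :: real
  shows "x * y < 0 \<longleftrightarrow> sgn x * sgn y = -1"
  by (cases x "0::real" rule: linorder_cases; cases y "0::real" rule: linorder_cases)
     (auto simp: mult_less_0_iff)

lemma V_sgn_eq:
  fixes A B :: "real poly" and c :: real
  assumes "c = 1 \<or> c = -1" "\<forall>k. sgn (coeff A k) = c * sgn (coeff B k)"
  shows "V A = V B \<and> sgn (fnz (coeffs A)) = c * sgn (fnz (coeffs B))"
  using assms(2)
proof (induction A arbitrary: B rule: pCons_induct)
  case 0
  then have "\<forall>k. coeff B k = 0" using assms(1) by (auto simp: sgn_zero_iff)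
  then have "B = 0" by (simp add: poly_eqI)
  then show ?case by (simp add: V_def)
next
  case (pCons a p)
  obtain b q where B: "B = pCons b q" by (cases B)
  have hb: "sgn a = c * sgn b" using pCons.prems[rule_format, of 0] B by simp
  have hq: "\<forall>k. sgn (coeff p k) = c * sgn (coeff q k)"
    using pCons.prems B by (metis coeff_pCons_Suc)
  from pCons.IH[OF hq] have ih: "V p = V q" "sgn (fnz (coeffs p)) = c * sgn (fnz (coeffs q))" by auto
  have cc: "c * c = 1" using assms(1) by auto
  have "a * fnz (coeffs p) < 0 \<longleftrightarrow> b * fnz (coeffs q) < 0"
    unfolding sgn_mult_neg_iff hb ih(2)
    by (metis (no_types, opaque_lifting) cc mult.assoc mult.commute mult.left_neutral)
  then have "V (pCons a p) = V (pCons b q)" using ih(1) unfolding V_pCons by (simp add: V_def)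
  moreover have "sgn (fnz (coeffs (pCons a p))) = c * sgn (fnz (coeffs (pCons b q)))"
    using hb ih(2) assms(1) unfolding fnz_pCons by (auto simp: sgn_zero_iff)
  ultimately show ?case using B by simp
qed

lemma sc_step_ineq:
  fixes a x f :: real
  shows "(if (a + x) * f < 0 then 1 else 0) + (if a * (if a + x = 0 then f else a + x) < 0 then 1 else (0::nat))
       \<le> (if x * f < 0 then 1 else 0) + (if a * (if x = 0 then f else x) < 0 then 1 else 0)"
  by (cases a "0::real" rule: linorder_cases; cases x "0::real" rule: linorder_cases;
      cases f "0::real" rule: linorder_cases; cases "a + x" "0::real" rule: linorder_cases)
     (auto simp: mult_less_0_iff)

lemma V_mult_1p:
  "V ([:1,1:] * P) \<le> V P \<and> fnz (coeffs ([:1,1:] * P)) = fnz (coeffs P)"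
proof (induction P rule: pCons_induct)
  case 0 then show ?case by simp
next
  case (pCons a P')
  have eq: "[:1,1:] * pCons a P' = pCons a ([:a:] + [:1,1:] * P')"
    by (rule poly_eq_poly_eq_iff[THEN iffD1]) (auto simp: fun_eq_iff algebra_simps)
  obtain x L where Q': "[:1,1:] * P' = pCons x L" by (cases "[:1,1:] * P'")
  have eq2: "[:a:] + pCons x L = pCons (a + x) L" by simp
  have ih1: "V (pCons x L) \<le> V P'" and ih2: "fnz (coeffs (pCons x L)) = fnz (coeffs P')"
    using pCons.IH Q' by auto
  have "V ([:1,1:] * pCons a P') = sc (coeffs L) + (if (a + x) * fnz (coeffs L) < 0 then 1 else 0)
      + (if a * (if a + x = 0 then fnz (coeffs L) else a + x) < 0 then 1 else 0)"
    unfolding eq Q' eq2 V_pCons fnz_pCons by (simp add: coeffs_pCons_eq_cCons sc_cCons)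
  also have "\<dots> \<le> sc (coeffs L) + (if x * fnz (coeffs L) < 0 then 1 else 0)
      + (if a * (if x = 0 then fnz (coeffs L) else x) < 0 then 1 else 0)"
    using sc_step_ineq[of a x "fnz (coeffs L)"] by simp
  also have "\<dots> = V (pCons x L) + (if a * fnz (coeffs (pCons x L)) < 0 then 1 else 0)"
    unfolding V_pCons fnz_pCons by simp
  also have "\<dots> \<le> V (pCons a P')"
    using ih1 ih2 unfolding V_pCons[of a P'] by (simp add: V_def)
  finally have 1: "V ([:1,1:] * pCons a P') \<le> V (pCons a P')" .
  have 2: "fnz (coeffs ([:1,1:] * pCons a P')) = fnz (coeffs (pCons a P'))"
    using ih2 unfolding eq Q' eq2 fnz_pCons by (auto split: if_splits)
  show ?case using 1 2 by simp
qed

lemma V_mult_1p_pow: "V ([:1,1:] ^ m * P) \<le> V P"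
proof (induction m)
  case 0 then show ?case by simp
next
  case (Suc m)
  have "V ([:1,1:] ^ Suc m * P) = V ([:1,1:] * ([:1,1:] ^ m * P))" by (simp only: power_Suc mult.assoc)
  also have "\<dots> \<le> V ([:1,1:] ^ m * P)" using V_mult_1p by blast
  finally show ?case using Suc by simp
qed

lemma sgn_near_0:
  fixes Q :: "real poly"
  shows "Q \<noteq> 0 \<Longrightarrow> \<exists>d>0. \<forall>u. 0 < u \<and> u < d \<longrightarrow> sgn (poly Q u) = sgn (fnz (coeffs Q))"
proof (induction Q rule: pCons_induct)
  case 0 then show ?case by simp
next
  case (pCons c Q')
  show ?case
  proof (cases "c = 0")
    case True
    then have "Q' \<noteq> 0" using pCons by auto
    then obtain d where d: "d > 0" "\<forall>u. 0 < u \<and> u < d \<longrightarrow> sgn (poly Q' u) = sgn (fnz (coeffs Q'))"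
      using pCons.IH by blast
    show ?thesis
      using d True by (intro exI[of _ d]) (auto simp: fnz_pCons fnz_cCons coeffs_pCons_eq_cCons sgn_mult)
  next
    case False
    have cont: "isCont (poly (pCons c Q')) 0" by (rule DERIV_isCont[OF poly_DERIV])
    then have lim: "(poly (pCons c Q') \<longlongrightarrow> c) (at 0)"
      by (simp add: isCont_def)
    have ev: "eventually (\<lambda>u. sgn (poly (pCons c Q') u) = sgn c) (at 0)"
    proof (cases "c > 0")
      case True
      from order_tendstoD(1)[OF lim, of 0] True show ?thesis
        by (auto elim: eventually_mono)
    next
      case False
      with \<open>c \<noteq> 0\<close> have "c < 0" by simp
      from order_tendstoD(2)[OF lim this] show ?thesis using \<open>c < 0\<close>
        by (auto elim: eventually_mono)
    qed
    then obtain d where d: "d > 0" "\<forall>u. u \<noteq> 0 \<and> dist u 0 < d \<longrightarrow> sgn (poly (pCons c Q') u) = sgn c"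
      unfolding eventually_at by auto
    show ?thesis
      using d False by (intro exI[of _ d]) (auto simp: fnz_pCons dist_real_def)
  qed
qed

lemma rolle_set:
  fixes f f' :: "real \<Rightarrow> real"
  assumes "finite S" "S \<noteq> {}" "\<forall>x\<in>S. f x = 0"
    and "\<And>x. Min S \<le> x \<Longrightarrow> x \<le> Max S \<Longrightarrow> (f has_real_derivative f' x) (at x)"
  shows "\<exists>T. finite T \<and> card S \<le> Suc (card T) \<and> (\<forall>x\<in>T. f' x = 0 \<and> Min S < x \<and> x < Max S)"
  using assms
proof (induction "card S" arbitrary: S rule: less_induct)
  case less
  define M where "M = Max S"
  define S0 where "S0 = S - {M}"
  have MS: "M \<in> S" using less.prems M_def by simp
  show ?case
  proof (cases "S0 = {}")
    case True
    then have "S = {M}" using MS S0_def by auto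
    then show ?thesis by (intro exI[of _ "{}"]) auto
  next
    case False
    have fin0: "finite S0" using less.prems S0_def by simp
    have sub: "S0 \<subseteq> S" using S0_def by auto
    have card0: "card S = Suc (card S0)" using card_Suc_Diff1[OF less.prems(1) MS] S0_def by simp
    have minle: "Min S \<le> Min S0" using sub False fin0 less.prems by (meson Min_antimono)
    have maxle: "Max S0 \<le> M" using sub False fin0 less.prems M_def by (meson Max_mono)
    have max0in: "Max S0 \<in> S0" using fin0 False by simp
    have maxlt: "Max S0 < M" using maxle max0in S0_def by (metis Diff_iff insertI1 order_le_neq_trans)
    obtain T0 where T0: "finite T0" "card S0 \<le> Suc (card T0)"
        "\<forall>x\<in>T0. f' x = 0 \<and> Min S0 < x \<and> x < Max S0"
    proof -
      have "\<exists>T. finite T \<and> card S0 \<le> Suc (card T) \<and> (\<forall>x\<in>T. f' x = 0 \<and> Min S0 < x \<and> x < Max S0)"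
      proof (rule less.hyps)
        show "card S0 < card S" using card0 by simp
        show "finite S0" by fact
        show "S0 \<noteq> {}" by fact
        show "\<forall>x\<in>S0. f x = 0" using less.prems sub by auto
        fix x assume "Min S0 \<le> x" "x \<le> Max S0"
        then show "(f has_real_derivative f' x) (at x)"
          using less.prems(4) minle maxle M_def by auto
      qed
      then show ?thesis using that by blast
    qed
    have minmax: "Min S \<le> Max S0" using minle fin0 False max0in by (meson Min_le order.trans)
    have deriv: "\<And>x. Max S0 \<le> x \<Longrightarrow> x \<le> M \<Longrightarrow> (f has_real_derivative f' x) (at x)"
    proof -
      fix x assume "Max S0 \<le> x" "x \<le> M"
      moreover have "Min S \<le> Max S0" using minle fin0 False max0in by (meson Min_le order.trans)
      ultimately show "(f has_real_derivative f' x) (at x)" using less.prems(4) M_def by auto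
    qed
    have "\<exists>z>Max S0. z < M \<and> (f has_real_derivative 0) (at z)"
    proof (rule Rolle[OF maxlt])
      show "f (Max S0) = f M" using less.prems(3) max0in sub MS by auto
      show "continuous_on {Max S0..M} f"
        using deriv by (intro continuous_at_imp_continuous_on) (metis DERIV_isCont atLeastAtMost_iff)
      fix x assume "Max S0 < x" "x < M"
      then show "f differentiable at x" using deriv unfolding real_differentiable_def
        by (meson less_imp_le)
    qed
    then obtain z where z: "Max S0 < z" "z < M" "(f has_real_derivative 0) (at z)" by blast
    have fz: "f' z = 0" using DERIV_unique[OF deriv z(3)] z by auto
    have znot: "z \<notin> T0" using T0(3) z(1) by auto
    show ?thesis
    proof (intro exI[of _ "insert z T0"] conjI)
      show "finite (insert z T0)" using T0 by simp
      show "card S \<le> Suc (card (insert z T0))" using card0 T0(2) znot T0(1) by simp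
      show "\<forall>x\<in>insert z T0. f' x = 0 \<and> Min S < x \<and> x < Max S"
      proof
        fix y assume "y \<in> insert z T0"
        then show "f' y = 0 \<and> Min S < y \<and> y < Max S"
        proof
          assume "y = z" then show ?thesis using fz z minmax M_def by auto
        next
          assume "y \<in> T0" then show ?thesis using T0(3) minle maxlt M_def by force
        qed
      qed
    qed
  qed
qed

lemma descartes:
  fixes P :: "real poly"
  assumes "P \<noteq> 0" "finite S" "S \<subseteq> {0<..}" "\<forall>x\<in>S. poly P x = 0"
  shows "card S \<le> V P"
  using assms
proof (induction "degree P" arbitrary: P S rule: less_induct)
  case less
  obtain a P1 where P: "P = pCons a P1" by (cases P)
  show ?case
  proof (cases "a = 0")
    case True
    then have P1: "P1 \<noteq> 0" using less.prems P by auto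
    have deg: "degree P1 < degree P" using P True P1 by simp
    have roots: "\<forall>x\<in>S. poly P1 x = 0" using less.prems P True by auto
    have "V P = V P1" unfolding P True V_pCons by (simp add: V_def)
    then show ?thesis using less.hyps[OF deg P1 less.prems(2,3) roots] by simp
  next
    case anz: False
    show ?thesis
    proof (cases "P1 = 0")
      case True
      then have "S = {}" using less.prems P anz by auto
      then show ?thesis by simp
    next
      case P1nz: False
      define D where "D = pderiv P"
      have coeffD: "\<And>k. coeff D k = real (Suc k) * coeff P1 k"
        by (simp add: D_def coeff_pderiv P del: of_nat_Suc)
      have sgnD: "\<forall>k. sgn (coeff D k) = 1 * sgn (coeff P1 k)"
        by (simp add: coeffD sgn_mult del: of_nat_Suc)
      from V_sgn_eq[OF _ sgnD] have VD: "V D = V P1" and fD: "sgn (fnz (coeffs D)) = sgn (fnz (coeffs P1))"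
        by auto
      have Dnz: "D \<noteq> 0"
      proof
        assume "D = 0"
        then have "\<forall>k. coeff P1 k = 0" using coeffD by (metis coeff_0 mult_eq_0_iff of_nat_eq_0_iff nat.distinct(1))
        then show False using P1nz by (simp add: poly_eqI)
      qed
      have degD: "degree D < degree P" using P P1nz by (simp add: D_def degree_pderiv)
      have VP: "V P = V P1 + (if a * fnz (coeffs P1) < 0 then 1 else 0)"
        unfolding P V_pCons by (simp add: V_def)
      show ?thesis
      proof (cases "S = {}")
        case True then show ?thesis by simp
      next
        case Sne: False
        define z1 where "z1 = Min S"
        have z1S: "z1 \<in> S" using Sne less.prems z1_def by simp
        have Spos: "z1 > 0" using less.prems z1S by auto
        have der: "\<And>x. (poly P has_real_derivative poly D x) (at x)"
          by (simp add: D_def poly_DERIV)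
        obtain T where T: "finite T" "card S \<le> Suc (card T)" "\<forall>x\<in>T. poly D x = 0 \<and> Min S < x \<and> x < Max S"
          using rolle_set[of S "poly P" "poly D", OF less.prems(2) Sne less.prems(4) der] by blast
        have Tpos: "T \<subseteq> {0<..}" using T Spos z1_def by force
        show ?thesis
        proof (cases "a * fnz (coeffs P1) < 0")
          case True
          have "card T \<le> V D" using less.hyps[OF degD Dnz T(1) Tpos] T(3) by auto
          then show ?thesis using T(2) VP VD True by simp
        next
          case same: False
          have fne: "fnz (coeffs P1) \<noteq> 0" using fnz_zero_iff P1nz by auto
          have "a * fnz (coeffs P1) > 0" using same fne anz
            by (metis linorder_neqE_linordered_idom mult_eq_0_iff)
          then have sgnsame: "sgn (fnz (coeffs D)) = sgn a" using fD
            by (metis mult_pos_pos sgn_mult_neg_iff mult_less_0_iff sgn_if zero_less_mult_iff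
                 neg_0_less_iff_less not_less_iff_gr_or_eq)
          obtain xi where xi: "0 < xi" "xi < z1" "poly P z1 - poly P 0 = (z1 - 0) * poly D xi"
            using poly_MVT[OF Spos, of P] D_def by auto
          have "poly P z1 = 0" using less.prems z1S by auto
          moreover have "poly P 0 = a" using P by simp
          ultimately have "poly D xi * z1 = - a" using xi Spos by (simp add: field_simps)
          then have "sgn (poly D xi) * sgn z1 = - sgn a"
            by (metis sgn_minus sgn_mult)
          then have sxi: "sgn (poly D xi) = - sgn a" using Spos by simp
          obtain d where d: "d > 0" "\<forall>u. 0 < u \<and> u < d \<longrightarrow> sgn (poly D u) = sgn (fnz (coeffs D))"
            using sgn_near_0[OF Dnz] by blast
          define u0 where "u0 = min (d/2) (xi/2)"
          have u0: "0 < u0" "u0 < d" "u0 < xi" using d xi u0_def by auto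
          have su0: "sgn (poly D u0) = sgn a" using d u0 sgnsame by auto
          have "poly D u0 * poly D xi < 0"
            unfolding sgn_mult_neg_iff su0 sxi using anz
            by (cases "a > 0") (auto simp: sgn_if)
          then obtain w where w: "u0 < w" "w < xi" "poly D w = 0" using poly_IVT[OF u0(3)] by auto
          have wnot: "w \<notin> T" using T(3) w xi z1_def by force
          have "card (insert w T) \<le> V D"
            using less.hyps[OF degD Dnz, of "insert w T"] T(1,3) Tpos w u0 by auto
          then show ?thesis using T(1,2) wnot VP VD by simp
        qed
      qed
    qed
  qed
qed

definition cc :: "real \<Rightarrow> nat \<Rightarrow> nat \<Rightarrow> real" where
  "cc a n k = (\<Prod>i<n. a + real k - real i)"

definition Fn :: "real \<Rightarrow> real poly \<Rightarrow> real poly \<Rightarrow> nat \<Rightarrow> real \<Rightarrow> real" where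
  "Fn a p E n u = poly ((pderiv ^^ n) p) u
     + (\<Sum>k\<le>degree E. coeff E k * cc a n k * u powr (a + real k - real n))"

lemma Fn_deriv:
  assumes "0 < u"
  shows "(Fn a p E n has_real_derivative Fn a p E (Suc n) u) (at u)"
proof -
  have 1: "(poly ((pderiv ^^ n) p) has_real_derivative poly ((pderiv ^^ Suc n) p) u) (at u)"
    using poly_DERIV by simp
  have 2: "((\<lambda>u. coeff E k * cc a n k * u powr (a + real k - real n)) has_real_derivative
       coeff E k * cc a (Suc n) k * u powr (a + real k - real (Suc n))) (at u)" for k
  proof -
    have "((\<lambda>u. u powr (a + real k - real n)) has_real_derivative
        (a + real k - real n) * u powr (a + real k - real n - real 1) * 1) (at u)"
      using DERIV_fun_powr[of "\<lambda>x. x" 1 u "a + real k - real n"] assms by simp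
    from DERIV_cmult[OF this, of "coeff E k * cc a n k"]
    show ?thesis by (simp add: cc_def algebra_simps)
  qed
  have "((\<lambda>u. poly ((pderiv ^^ n) p) u
     + (\<Sum>k\<le>degree E. coeff E k * cc a n k * u powr (a + real k - real n))) has_real_derivative
     poly ((pderiv ^^ Suc n) p) u + (\<Sum>k\<le>degree E. coeff E k * cc a (Suc n) k * u powr (a + real k - real (Suc n)))) (at u)"
    by (intro DERIV_add 1 DERIV_sum 2)
  then show ?thesis unfolding Fn_def[abs_def] by simp
qed

lemma iter_rolle:
  fixes F :: "nat \<Rightarrow> real \<Rightarrow> real"
  assumes der: "\<And>n u. 0 < u \<Longrightarrow> u < 1 \<Longrightarrow> (F n has_real_derivative F (Suc n) u) (at u)"
    and S: "finite S" "S \<subseteq> {0<..<1}" "\<forall>x\<in>S. F 0 x = 0"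
  shows "\<exists>T. finite T \<and> T \<subseteq> {0<..<1} \<and> card S \<le> card T + n \<and> (\<forall>x\<in>T. F n x = 0)"
proof (induction n)
  case 0 then show ?case using S by (intro exI[of _ S]) auto
next
  case (Suc n)
  then obtain T where T: "finite T" "T \<subseteq> {0<..<1}" "card S \<le> card T + n" "\<forall>x\<in>T. F n x = 0"
    by blast
  show ?case
  proof (cases "T = {}")
    case True then show ?thesis using T by (intro exI[of _ "{}"]) auto
  next
    case False
    have mm: "0 < Min T" "Max T < 1" using T(1,2) False by auto
    obtain T' where T': "finite T'" "card T \<le> Suc (card T')"
        "\<forall>x\<in>T'. F (Suc n) x = 0 \<and> Min T < x \<and> x < Max T"
      using rolle_set[of T "F n" "F (Suc n)", OF T(1) False T(4)] der mm by force
    show ?thesis using T T' mm by (intro exI[of _ T']) force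
  qed
qed

lemma pderiv_funpow_zero: "degree p < n \<Longrightarrow> (pderiv ^^ n) p = (0 :: real poly)"
proof (induction n arbitrary: p)
  case 0 then show ?case by simp
next
  case (Suc n)
  have eq: "(pderiv ^^ Suc n) p = (pderiv ^^ n) (pderiv p)" by (simp only: funpow_Suc_right o_apply)
  show ?case
  proof (cases n)
    case 0 then show ?thesis using Suc.prems eq by (simp add: pderiv_eq_0_iff)
  next
    case (Suc n')
    then have "degree (pderiv p) < n" using Suc.prems by (simp add: degree_pderiv)
    then show ?thesis using Suc.IH eq by simp
  qed
qed

lemma half_not_int: "(1/2 :: real) \<noteq> real i - real k" "(-1/2 :: real) \<noteq> real i - real k"
proof -
  have "real i - real k = of_int (int i - int k)" by simp
  moreover have "of_int z \<noteq> (1/2 :: real)" for z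
  proof
    assume "of_int z = (1/2::real)"
    then have "of_int (2 * z) = (1::real)" by simp
    then have "2 * z = 1" by (metis of_int_eq_1_iff)
    then show False by presburger
  qed
  moreover have "of_int z \<noteq> (-1/2 :: real)" for z
  proof
    assume "of_int z = (-1/2::real)"
    then have "of_int (2 * z) = (-1::real)" by simp
    then have "2 * z = -1" by (metis of_int_eq_iff of_int_minus of_int_1)
    then show False by presburger
  qed
  ultimately show "(1/2 :: real) \<noteq> real i - real k" "(-1/2 :: real) \<noteq> real i - real k"
    by metis+
qed

lemma cc_nz:
  assumes "a = 1/2 \<or> a = -1/2"
  shows "cc a n k \<noteq> 0"
proof -
  have "\<forall>i. a + real k - real i \<noteq> 0"
  proof
    fix i show "a + real k - real i \<noteq> 0"
      using assms half_not_int[of i k] by (auto simp: algebra_simps)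
  qed
  then show ?thesis unfolding cc_def by (simp add: prod_zero_iff)
qed

lemma cc_rel: "cc a (Suc r) (Suc k) * (a + real k - real r) = cc a (Suc r) k * (a + real k + 1)"
proof -
  have A: "cc a (Suc r) (Suc k) = (a + real k + 1) * (\<Prod>i<r. a + real k - real i)"
    unfolding cc_def by (subst prod.lessThan_Suc_shift) (simp add: algebra_simps)
  have B: "cc a (Suc r) k = (\<Prod>i<r. a + real k - real i) * (a + real k - real r)"
    unfolding cc_def by simp
  show ?thesis unfolding A B by (simp add: mult_ac)
qed

lemma cc_sgn:
  assumes "a = 1/2 \<or> a = -1/2" "k \<le> r"
  shows "sgn (cc a (Suc r) k) = sgn (cc a (Suc r) 0) * (-1) ^ k"
  using assms(2)
proof (induction k)
  case 0 then show ?case by simp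
next
  case (Suc k)
  have neg: "a + real k - real r < 0" using Suc.prems assms(1) by auto
  have pos: "a + real k + 1 > 0" using assms(1) by auto
  have "sgn (cc a (Suc r) (Suc k)) * sgn (a + real k - real r) = sgn (cc a (Suc r) k) * sgn (a + real k + 1)"
    using cc_rel[of a r k] by (metis sgn_mult)
  then have "sgn (cc a (Suc r) (Suc k)) = - sgn (cc a (Suc r) k)" using neg pos by simp
  then show ?case using Suc by simp
qed

lemma coeff_pcomp_neg: "coeff (P \<circ>\<^sub>p [:0, -1:]) k = (-1) ^ k * coeff (P :: real poly) k"
proof (induction P arbitrary: k rule: pCons_induct)
  case 0 then show ?case by simp
next
  case (pCons a P)
  show ?case
    by (cases k) (simp_all add: pcompose_pCons pCons.IH coeff_pCons)
qed

lemma main_G: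
  fixes p q :: "real poly" and a :: real and r d m :: nat and S :: "real set"
  assumes a: "a = 1/2 \<or> a = -1/2"
    and degp: "degree p \<le> r" and degq: "degree q \<le> d" and md: "m + d \<le> r"
    and S: "finite S" "S \<subseteq> {0<..<1}" "card S = r + d + 2"
    and zero: "\<forall>u\<in>S. poly p u + u powr a * ((1 - u) ^ m * poly q u) = 0"
  shows "p = 0 \<and> q = 0"
proof -
  define E where "E = [:1, -1:] ^ m * q"
  have polyE: "poly E u = (1 - u) ^ m * poly q u" for u
    by (simp add: E_def poly_power)
  have degE: "degree E \<le> r"
  proof -
    have "degree E \<le> degree ([:1, -1:] ^ m :: real poly) + degree q" unfolding E_def by (rule degree_mult_le)
    also have "degree ([:1, -1:] ^ m :: real poly) \<le> m"
      using degree_power_le[of "[:1, -1:] :: real poly" m] by simp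
    finally show ?thesis using degq md by linarith
  qed
  have Fn0: "Fn a p E 0 u = poly p u + u powr a * poly E u" if "u > 0" for u
  proof -
    have "u powr a * poly E u = (\<Sum>k\<le>degree E. coeff E k * u powr (a + real k))"
      unfolding poly_altdef sum_distrib_left
      by (rule sum.cong) (auto simp: powr_add powr_realpow that)
    then show ?thesis unfolding Fn_def cc_def by simp
  qed
  have S0: "\<forall>x\<in>S. Fn a p E 0 x = 0" using zero S(2) Fn0 polyE by auto
  obtain T where T: "finite T" "T \<subseteq> {0<..<1}" "card S \<le> card T + Suc r"
      "\<forall>x\<in>T. Fn a p E (Suc r) x = 0"
    using iter_rolle[of "Fn a p E" S "Suc r", OF Fn_deriv S(1,2) S0] by auto
  have pz: "(pderiv ^^ Suc r) p = 0" using degp by (intro pderiv_funpow_zero) simp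
  define Tp where "Tp = (\<Sum>k\<le>degree E. monom (coeff E k * cc a (Suc r) k) k)"
  have coeffTp: "coeff Tp j = (if j \<le> degree E then coeff E j * cc a (Suc r) j else 0)" for j
    unfolding Tp_def by (simp add: coeff_sum coeff_monom)
  have FnT: "Fn a p E (Suc r) u = u powr (a - real (Suc r)) * poly Tp u" if "u > 0" for u
  proof -
    have "u powr (a - real (Suc r)) * poly Tp u
        = (\<Sum>k\<le>degree E. coeff E k * cc a (Suc r) k * u powr (a + real k - real (Suc r)))"
      unfolding Tp_def poly_sum poly_monom sum_distrib_left
    proof (rule sum.cong)
      fix k assume "k \<in> {..degree E}"
      have "u powr (a + real k - real (Suc r)) = u powr (a - real (Suc r)) * u ^ k"
        using that by (simp add: powr_add[symmetric] powr_realpow[symmetric] algebra_simps)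
      then show "u powr (a - real (Suc r)) * (coeff E k * cc a (Suc r) k * u ^ k)
          = coeff E k * cc a (Suc r) k * u powr (a + real k - real (Suc r))" by simp
    qed simp
    then show ?thesis unfolding Fn_def pz by simp
  qed
  have Troots: "\<forall>x\<in>T. poly Tp x = 0"
  proof
    fix x assume xT: "x \<in> T"
    then have xp: "x > 0" using T(2) by auto
    have "x powr (a - real (Suc r)) * poly Tp x = 0" using FnT[OF xp] T(4) xT by simp
    moreover have "x powr (a - real (Suc r)) > 0" using xp by simp
    ultimately show "poly Tp x = 0" by simp
  qed
  have Tp0: "Tp = 0"
  proof (rule ccontr)
    assume Tpnz: "Tp \<noteq> 0"
    have Tpos: "T \<subseteq> {0<..}" using T(2) by auto
    have c1: "card T \<le> V Tp" by (rule descartes[OF Tpnz T(1) Tpos Troots])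
    define c where "c = sgn (cc a (Suc r) 0)"
    have c: "c = 1 \<or> c = -1" using cc_nz[OF a] c_def by (auto simp: sgn_if)
    define Em where "Em = E \<circ>\<^sub>p [:0, -1:]"
    define Qm where "Qm = q \<circ>\<^sub>p [:0, -1:]"
    have sg: "\<forall>k. sgn (coeff Tp k) = c * sgn (coeff Em k)"
    proof
      fix k
      show "sgn (coeff Tp k) = c * sgn (coeff Em k)"
      proof (cases "k \<le> degree E")
        case True
        then have "sgn (cc a (Suc r) k) = c * (-1) ^ k"
        proof -
          have "k \<le> r" using True degE by linarith
          from cc_sgn[OF a this] show ?thesis unfolding c_def .
        qed
        moreover have "sgn ((-1::real) ^ k) = (-1) ^ k" by (induction k) (simp_all add: sgn_mult)
        moreover have "sgn (coeff Tp k) = sgn (coeff E k) * sgn (cc a (Suc r) k)"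
          using True by (simp add: coeffTp sgn_mult)
        moreover have "sgn (coeff Em k) = sgn ((-1::real) ^ k) * sgn (coeff E k)"
          unfolding Em_def coeff_pcomp_neg sgn_mult ..
        ultimately show ?thesis by (metis mult.commute mult.left_commute)
      next
        case False
        then show ?thesis by (simp add: coeffTp Em_def coeff_pcomp_neg coeff_eq_0)
      qed
    qed
    have "V Tp = V Em" using V_sgn_eq[OF c sg] by simp
    also have "Em = [:1, 1:] ^ m * Qm"
    proof -
      have "poly Em = poly ([:1, 1:] ^ m * Qm)"
        by (simp add: fun_eq_iff Em_def Qm_def poly_pcompose polyE poly_power)
      then show ?thesis by (simp add: poly_eq_poly_eq_iff)
    qed
    also have "V ([:1, 1:] ^ m * Qm) \<le> V Qm" by (rule V_mult_1p_pow)
    also have "\<dots> \<le> degree Qm" by (rule V_le_degree)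
    also have "degree Qm = degree q" by (simp add: Qm_def degree_pcompose)
    finally have "card T \<le> d" using c1 degq by linarith
    then show False using T(3) S(3) by linarith
  qed
  have E0: "E = 0"
  proof (rule poly_eqI)
    fix j
    show "coeff E j = coeff 0 j"
    proof (cases "j \<le> degree E")
      case True
      then have "coeff E j * cc a (Suc r) j = 0" using coeffTp[of j] Tp0 by simp
      then show ?thesis using cc_nz[OF a] by simp
    next
      case False then show ?thesis by (simp add: coeff_eq_0)
    qed
  qed
  have q0: "q = 0"
  proof -
    have "([:1, -1:] :: real poly) ^ m \<noteq> 0" by simp
    then show ?thesis using E0 unfolding E_def by simp
  qed
  have p0: "p = 0"
  proof (rule ccontr)
    assume pnz: "p \<noteq> 0"
    have "S \<subseteq> {x. poly p x = 0}" using zero q0 by auto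
    then have "card S \<le> card {x. poly p x = 0}" using poly_roots_finite[OF pnz] by (rule card_mono[rotated])
    also have "\<dots> \<le> degree p" by (rule card_poly_roots_bound[OF pnz])
    finally show False using degp S(3) by linarith
  qed
  show ?thesis using p0 q0 by simp
qed

theorem proposition2p4:
  fixes r s \<epsilon> :: nat and p q :: "real poly" and g :: "real \<Rightarrow> real" and Z :: "real set"
  assumes "0 < s" and "s < r" and "\<epsilon> \<in> {0, 1}"
    and "degree p \<le> r" and "degree q \<le> s - 1 + \<epsilon>"
    and "g = g1 r s p q \<or> g = g2 r s p q"
    and "Z \<subseteq> {0<..<1}" and "finite Z" and "card Z = r + s + 1 + \<epsilon>"
    and "\<forall>t\<in>Z. g t = 0"
  shows "(\<forall>t\<in>{0<..<1}. g t = 0) \<and> p = 0 \<and> q = 0"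
proof -
  define m where "m = r - s"
  define d where "d = s - 1 + \<epsilon>"
  have md: "m + d \<le> r" using assms(1,2,3) by (auto simp: m_def d_def)
  have degq: "degree q \<le> d" using assms(5) d_def by simp
  define S where "S = (\<lambda>t::real. t ^ 2) ` Z"
  have inj: "inj_on (\<lambda>t::real. t ^ 2) Z"
  proof (rule inj_onI)
    fix x y assume "x \<in> Z" "y \<in> Z" "x ^ 2 = y ^ 2"
    moreover have "x \<ge> 0" "y \<ge> 0" using \<open>x \<in> Z\<close> \<open>y \<in> Z\<close> assms(7) by auto
    ultimately show "x = y" by (metis power2_eq_iff_nonneg)
  qed
  have cardS: "card S = r + d + 2"
    using card_image[OF inj] assms(9,1) unfolding S_def d_def by simp
  have finS: "finite S" using assms(8) S_def by simp
  have Ssub: "S \<subseteq> {0<..<1}"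
  proof
    fix u assume "u \<in> S"
    then obtain t where t: "t \<in> Z" "u = t ^ 2" using S_def by auto
    then have "0 < t" "t < 1" using assms(7) by auto
    then have "0 < t ^ 2" "t ^ 2 < 1" by (simp_all add: power_less_one_iff)
    then show "u \<in> {0<..<1}" using t by simp
  qed
  obtain a :: real where a: "a = 1/2 \<or> a = -1/2"
    and ga: "\<And>t. 0 < t \<Longrightarrow> g t = poly p (t ^ 2) + (t ^ 2) powr a * ((1 - t ^ 2) ^ m * poly q (t ^ 2))"
  proof (cases "g = g1 r s p q")
    case True
    have "(t ^ 2) powr (1/2) = t" if "0 < t" for t :: real
      using that by (simp add: powr_half_sqrt)
    then show ?thesis using True that[of "1/2"] by (simp add: g1_def m_def)
  next
    case False
    then have G: "g = g2 r s p q" using assms(6) by simp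
    have "(t ^ 2) powr (-1/2) = inverse t" if "0 < t" for t :: real
    proof -
      have "(t ^ 2) powr (-1/2) = (t ^ 2) powr (- (1/2))" by simp
      also have "\<dots> = inverse ((t ^ 2) powr (1/2))" by (rule powr_minus)
      also have "(t ^ 2) powr (1/2) = t" using that by (simp add: powr_half_sqrt)
      finally show ?thesis .
    qed
    then show ?thesis using G that[of "-1/2"] by (simp add: g2_def m_def)
  qed
  have zero: "\<forall>u\<in>S. poly p u + u powr a * ((1 - u) ^ m * poly q u) = 0"
  proof
    fix u assume "u \<in> S"
    then obtain t where t: "t \<in> Z" "u = t ^ 2" using S_def by auto
    then have "0 < t" using assms(7) by auto
    then show "poly p u + u powr a * ((1 - u) ^ m * poly q u) = 0"
      using ga[of t] t assms(10) by simp
  qed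
  have pq: "p = 0 \<and> q = 0"
    by (rule main_G[OF a assms(4) degq md finS Ssub cardS zero])
  have "\<forall>t\<in>{0<..<1}. g t = 0"
    using assms(6) pq by (auto simp: g1_def g2_def)
  then show ?thesis using pq by simp
qed

end
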